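(* Let $n, r$ be nonnegative integers with $n\geqslant\lceil r/2\rceil+2$. Then $m(L(K_n),r)\leqslant\lfloor (r+2)^2/8\rfloor$.
   Context: All graphs are finite, simple and undirected. For a nonnegative integer $r$ and a graph $G$, the $r$-neighbor bootstrap percolation process on $G$ starts with a set $A_0\subseteq V(G)$ of initially active vertices, and for $i\geqslant 1$, $A_i=A_{i-1}\cup\{v\in V(G) : |N(v)\cap A_{i-1}|\geqslant r\}$, where $N(v)$ is the set of neighbors of $v$. The set $A_0$ is a percolating set if $\bigcup_{i\geqslant 0}A_i=V(G)$; $m(G,r)$ is the minimum size of a percolating set. $L(G)$ is the line graph of $G$ (vertex set $E(G)$, two vertices adjacent iff the edges share an endpoint), and $K_n$ is the complete graph on $n$ vertices. *)

theory Defs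
  imports Main
begin

text \<open>A finite simple graph is given by a vertex set V and a symmetric irreflexive
adjacency relation E (only its restriction to V matters).\<close>

definition nbrs :: "'a set \<Rightarrow> ('a \<Rightarrow> 'a \<Rightarrow> bool) \<Rightarrow> 'a \<Rightarrow> 'a set" where
  "nbrs V E v = {u \<in> V. E v u}"

fun boot :: "'a set \<Rightarrow> ('a \<Rightarrow> 'a \<Rightarrow> bool) \<Rightarrow> nat \<Rightarrow> 'a set \<Rightarrow> nat \<Rightarrow> 'a set" where
  "boot V E r A 0 = A"
| "boot V E r A (Suc i) =
     boot V E r A i \<union> {v \<in> V. card (nbrs V E v \<inter> boot V E r A i) \<ge> r}"

definition percolating :: "'a set \<Rightarrow> ('a \<Rightarrow> 'a \<Rightarrow> bool) \<Rightarrow> nat \<Rightarrow> 'a set \<Rightarrow> bool" where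
  "percolating V E r A \<longleftrightarrow> A \<subseteq> V \<and> (\<Union>i. boot V E r A i) = V"

definition m_perc :: "'a set \<Rightarrow> ('a \<Rightarrow> 'a \<Rightarrow> bool) \<Rightarrow> nat \<Rightarrow> nat" where
  "m_perc V E r = (LEAST k. \<exists>A. percolating V E r A \<and> card A = k)"

definition line_V :: "'a set \<Rightarrow> ('a \<Rightarrow> 'a \<Rightarrow> bool) \<Rightarrow> 'a set set" where
  "line_V V E = {{u, v} | u v. u \<in> V \<and> v \<in> V \<and> u \<noteq> v \<and> E u v}"

definition line_E :: "'a set \<Rightarrow> 'a set \<Rightarrow> bool" where
  "line_E e f \<longleftrightarrow> e \<noteq> f \<and> e \<inter> f \<noteq> {}"

definition K_V :: "nat \<Rightarrow> nat set" where "K_V n = {0..<n}"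
definition K_E :: "nat \<Rightarrow> nat \<Rightarrow> bool" where "K_E u v \<longleftrightarrow> u \<noteq> v"

end

theory Submission
  imports Defs
begin

definition KE :: "nat set \<Rightarrow> nat set set" where
  "KE W = {{u, v} | u v. u \<in> W \<and> v \<in> W \<and> u \<noteq> v}"

definition nb :: "nat set set \<Rightarrow> nat \<Rightarrow> nat \<Rightarrow> nat set set" where
  "nb C u v = {f \<in> C. f \<noteq> {u,v} \<and> f \<inter> {u,v} \<noteq> {}}"

definition closedc :: "nat \<Rightarrow> nat set \<Rightarrow> nat set set \<Rightarrow> bool" where
  "closedc r W C \<longleftrightarrow> (\<forall>u\<in>W. \<forall>v\<in>W. u \<noteq> v \<longrightarrow> r \<le> card (nb C u v) \<longrightarrow> {u,v} \<in> C)"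

definition perc :: "nat \<Rightarrow> nat set \<Rightarrow> nat set set \<Rightarrow> bool" where
  "perc r W H \<longleftrightarrow> (\<forall>C. H \<subseteq> C \<longrightarrow> C \<subseteq> KE W \<longrightarrow> closedc r W C \<longrightarrow> C = KE W)"

definition deg :: "nat set set \<Rightarrow> nat \<Rightarrow> nat" where
  "deg H x = card {w. {x,w} \<in> H}"

definition g :: "nat \<Rightarrow> nat \<Rightarrow> nat" where
  "g r j = (if j = 0 then (r+1) div 2 else (r+2-j) div 2)"

lemma KE_mem: "{u,v} \<in> KE W \<longleftrightarrow> u \<in> W \<and> v \<in> W \<and> u \<noteq> v"
proof
  assume "{u,v} \<in> KE W"
  then obtain x y where "{u,v} = {x,y}" "x \<in> W" "y \<in> W" "x \<noteq> y" unfolding KE_def by blast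
  then show "u \<in> W \<and> v \<in> W \<and> u \<noteq> v" by (metis doubleton_eq_iff insert_absorb2 singleton_insert_inj_eq)
next
  assume "u \<in> W \<and> v \<in> W \<and> u \<noteq> v"
  then show "{u,v} \<in> KE W" unfolding KE_def by blast
qed

lemma KE_elem: "f \<in> KE W \<Longrightarrow> \<exists>u v. f = {u,v} \<and> u \<in> W \<and> v \<in> W \<and> u \<noteq> v"
  unfolding KE_def by auto

lemma KE_Pow: "KE W \<subseteq> Pow W"
  unfolding KE_def by auto

lemma finite_KE: "finite W \<Longrightarrow> finite (KE W)"
  by (rule finite_subset[OF KE_Pow]) simp

lemma nbr_in: "H \<subseteq> KE W \<Longrightarrow> {w. {x,w} \<in> H} \<subseteq> W"
proof
  fix w assume "H \<subseteq> KE W" "w \<in> {w. {x,w} \<in> H}"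
  then have "{x,w} \<in> KE W" by auto
  then show "w \<in> W" by (simp add: KE_mem)
qed

lemma nbr_fin: "H \<subseteq> KE W \<Longrightarrow> finite W \<Longrightarrow> finite {w. {x,w} \<in> H}"
  by (rule finite_subset[OF nbr_in])

lemma count_lb:
  assumes C: "C \<subseteq> KE W" and fW: "finite W" and uv: "u \<noteq> v"
    and X: "X \<subseteq> {w. {u,w} \<in> C \<and> w \<noteq> v}" and Y: "Y \<subseteq> {w. {v,w} \<in> C \<and> w \<noteq> u}"
  shows "card X + card Y \<le> card (nb C u v)"
proof -
  have fC: "finite C" using C finite_KE[OF fW] by (rule finite_subset)
  have fX: "finite X" by (rule finite_subset[OF _ nbr_fin[OF C fW, of u]]) (use X in auto)
  have fY: "finite Y" by (rule finite_subset[OF _ nbr_fin[OF C fW, of v]]) (use Y in auto)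
  have i1: "inj_on (\<lambda>w. {u,w}) X"
  proof (rule inj_onI)
    fix x y assume "x \<in> X" "y \<in> X" "{u,x} = {u,y}"
    then show "x = y" using X C KE_mem by (auto simp: doubleton_eq_iff)
  qed
  have i2: "inj_on (\<lambda>w. {v,w}) Y"
  proof (rule inj_onI)
    fix x y assume "x \<in> Y" "y \<in> Y" "{v,x} = {v,y}"
    then show "x = y" using Y C KE_mem by (auto simp: doubleton_eq_iff)
  qed
  have d: "(\<lambda>w. {u,w}) ` X \<inter> (\<lambda>w. {v,w}) ` Y = {}"
    using X Y uv by (auto simp: doubleton_eq_iff)
  have s: "(\<lambda>w. {u,w}) ` X \<union> (\<lambda>w. {v,w}) ` Y \<subseteq> nb C u v"
    using X Y uv unfolding nb_def by (auto simp: doubleton_eq_iff)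
  have "card X + card Y = card ((\<lambda>w. {u,w}) ` X \<union> (\<lambda>w. {v,w}) ` Y)"
    using card_Un_disjoint[OF finite_imageI[OF fX] finite_imageI[OF fY] d]
      card_image[OF i1] card_image[OF i2] by simp
  also have "\<dots> \<le> card (nb C u v)"
    by (rule card_mono[OF _ s]) (use fC in \<open>simp add: nb_def\<close>)
  finally show ?thesis .
qed

lemma finite_chain:
  assumes "finite F" "F \<subseteq> (\<Union>i. B i)" "\<And>i. B i \<subseteq> B (Suc i)"
  shows "\<exists>i::nat. F \<subseteq> B i"
  using assms(1,2)
proof (induction F rule: finite_induct)
  case empty then show ?case by auto
next
  case (insert x F)
  then obtain i where i: "F \<subseteq> B i" by auto
  from insert obtain j where j: "x \<in> B j" by auto
  have "B i \<subseteq> B (max i j)" "B j \<subseteq> B (max i j)"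
    using lift_Suc_mono_le[of B, OF assms(3)] by auto
  then show ?case using i j by blast
qed

lemma lineV_eq: "line_V (K_V n) K_E = KE {0..<n}"
  unfolding line_V_def KE_def K_V_def K_E_def by auto

lemma perc_percolating:
  assumes H: "H \<subseteq> KE {0..<n}" and P: "perc r {0..<n} H"
  shows "percolating (line_V (K_V n) K_E) line_E r H"
proof -
  define V where "V = KE {0..<(n::nat)}"
  define B where "B i = boot V line_E r H i" for i
  have fV: "finite V" unfolding V_def by (rule finite_KE) simp
  have mono: "B i \<subseteq> B (Suc i)" for i unfolding B_def by auto
  have BV: "B i \<subseteq> V" for i
  proof (induction i)
    case 0 then show ?case using H by (simp add: B_def V_def)
  next
    case (Suc i) then show ?case by (auto simp: B_def)
  qed
  define U where "U = (\<Union>i. B i)"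
  have UV: "U \<subseteq> V" using BV unfolding U_def by auto
  have cl: "closedc r {0..<n} U"
    unfolding closedc_def
  proof (intro ballI impI)
    fix u v assume u: "u \<in> {0..<n}" and v: "v \<in> {0..<n}" and uv: "u \<noteq> v"
      and r: "r \<le> card (nb U u v)"
    have fin: "finite (nb U u v)" using finite_subset[OF UV fV] unfolding nb_def by simp
    obtain i where i: "nb U u v \<subseteq> B i"
      using finite_chain[of "nb U u v" B, OF fin _ mono] unfolding U_def nb_def by blast
    have sub: "nb U u v \<subseteq> nbrs V line_E {u,v} \<inter> B i"
    proof
      fix f assume f: "f \<in> nb U u v"
      then have "f \<in> V" "f \<in> B i" "f \<noteq> {u,v}" "f \<inter> {u,v} \<noteq> {}" using i UV unfolding nb_def by auto
      then show "f \<in> nbrs V line_E {u,v} \<inter> B i" unfolding nbrs_def line_E_def by blast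
    qed
    have "card (nb U u v) \<le> card (nbrs V line_E {u,v} \<inter> B i)"
      by (rule card_mono[OF _ sub]) (use fV in \<open>simp add: nbrs_def\<close>)
    then have "r \<le> card (nbrs V line_E {u,v} \<inter> B i)" using r by simp
    moreover have "{u,v} \<in> V" unfolding V_def using u v uv KE_mem by blast
    ultimately have "{u,v} \<in> B (Suc i)" unfolding B_def by simp
    then show "{u,v} \<in> U" unfolding U_def by blast
  qed
  have "H \<subseteq> B 0" by (simp add: B_def)
  then have HU: "H \<subseteq> U" unfolding U_def by blast
  have "U = V" using P HU UV cl unfolding perc_def V_def by blast
  then show ?thesis unfolding percolating_def lineV_eq B_def U_def V_def using H by simp
qed


lemma restrict_closed:
  assumes C: "C \<subseteq> KE {a..<n}" and cl: "closedc r {a..<n} C"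
    and U0: "\<forall>w\<in>{a..<n}. w \<noteq> a \<longrightarrow> {a,w} \<in> C"
    and U1: "\<forall>w\<in>{a..<n}. w \<noteq> Suc a \<longrightarrow> {Suc a,w} \<in> C"
  shows "closedc (r-4) {a+2..<n} (C \<inter> KE {a+2..<n})"
  unfolding closedc_def
proof (intro ballI impI)
  fix u v assume u: "u \<in> {a+2..<n}" and v: "v \<in> {a+2..<n}" and uv: "u \<noteq> v"
    and r: "r - 4 \<le> card (nb (C \<inter> KE {a+2..<n}) u v)"
  define F where "F = {{u,a},{u,Suc a},{v,a},{v,Suc a}}"
  have fC: "finite C" using C finite_KE[of "{a..<n}"] by (simp add: finite_subset)
  have cF: "card F = 4" using u v uv unfolding F_def by (auto simp: doubleton_eq_iff)
  have F1: "F \<subseteq> nb C u v"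
  proof -
    have "{a,u} \<in> C" "{a,v} \<in> C" "{Suc a,u} \<in> C" "{Suc a,v} \<in> C" using U0 U1 u v by auto
    then show ?thesis using u v uv unfolding F_def nb_def by (auto simp: doubleton_eq_iff insert_commute)
  qed
  have F2: "F \<inter> nb (C \<inter> KE {a+2..<n}) u v = {}"
    unfolding F_def nb_def by (auto simp: KE_mem)
  have F3: "nb (C \<inter> KE {a+2..<n}) u v \<subseteq> nb C u v" unfolding nb_def by auto
  have "card (nb (C \<inter> KE {a+2..<n}) u v) + 4 = card (nb (C \<inter> KE {a+2..<n}) u v \<union> F)"
    using cF F2 fC by (subst card_Un_disjoint) (auto simp: nb_def F_def)
  also have "\<dots> \<le> card (nb C u v)"
    by (rule card_mono) (use fC F1 F3 in \<open>auto simp: nb_def\<close>)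
  finally have "r \<le> card (nb C u v)" using r by linarith
  then have "{u,v} \<in> C" using cl u v uv unfolding closedc_def by auto
  then show "{u,v} \<in> C \<inter> KE {a+2..<n}" using u v uv by (simp add: KE_mem)
qed

lemma peel_final:
  assumes C: "C \<subseteq> KE {a..<n}"
    and U0: "\<forall>w\<in>{a..<n}. w \<noteq> a \<longrightarrow> {a,w} \<in> C"
    and U1: "\<forall>w\<in>{a..<n}. w \<noteq> Suc a \<longrightarrow> {Suc a,w} \<in> C"
    and R: "C \<inter> KE {a+2..<n} = KE {a+2..<n}"
  shows "C = KE {a..<n}"
proof
  show "KE {a..<n} \<subseteq> C"
  proof
    fix f assume "f \<in> KE {a..<n}"
    then obtain x y where f: "f = {x,y}" "x \<in> {a..<n}" "y \<in> {a..<n}" "x \<noteq> y" using KE_elem by blast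
    show "f \<in> C"
    proof (cases "x = a \<or> x = Suc a \<or> y = a \<or> y = Suc a")
      case True
      then show ?thesis using f U0 U1 by (auto simp: insert_commute)
    next
      case False
      then have "{x,y} \<in> KE {a+2..<n}" using f by (auto simp: KE_mem)
      then show ?thesis using R f by blast
    qed
  qed
qed (rule C)

lemma card_odd_lt: "card {i::nat. i < h \<and> odd i} = h div 2"
proof (induction h)
  case 0 then show ?case by simp
next
  case (Suc h)
  have "{i. i < Suc h \<and> odd i} = (if odd h then insert h {i. i < h \<and> odd i} else {i. i < h \<and> odd i})"
    by (auto simp: less_Suc_eq)
  then show ?case using Suc by auto
qed

lemma card_even_lt: "card {i::nat. i < h \<and> even i} = (h+1) div 2"
proof (induction h)
  case 0 then show ?case by simp
next
  case (Suc h)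
  have "{i. i < Suc h \<and> even i} = (if even h then insert h {i. i < h \<and> even i} else {i. i < h \<and> even i})"
    by (auto simp: less_Suc_eq)
  then show ?case using Suc by auto
qed

lemma card_E0: "card {j::nat. 2 \<le> j \<and> j \<le> r \<and> even j} = r div 2"
proof -
  have "{j::nat. 2 \<le> j \<and> j \<le> r \<and> even j} = {i. i < r+1 \<and> even i} - {0}" by auto
  then show ?thesis using card_even_lt[of "r+1"] by simp
qed

lemma card_O1: "card {j::nat. 3 \<le> j \<and> j \<le> r \<and> odd j} = (r+1) div 2 - 1"
proof -
  have "{j::nat. 3 \<le> j \<and> j \<le> r \<and> odd j} = {i. i < r+1 \<and> odd i} - {1}"
    by (auto; presburger)
  show ?thesis
  proof (cases "r = 0")
    case True
    then have "{j::nat. 3 \<le> j \<and> j \<le> r \<and> odd j} = {}" by auto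
    then show ?thesis using True by simp
  next
    case False
    then have "1 \<in> {i::nat. i < r+1 \<and> odd i}" by simp
    then show ?thesis using card_odd_lt[of "r+1"] \<open>_ = _ - {1}\<close> by simp
  qed
qed

lemma card_Oj: "card {i::nat. 3 \<le> i \<and> i < j \<and> odd i} = j div 2 - 1"
proof -
  have "{i::nat. 3 \<le> i \<and> i < j \<and> odd i} = {i. i < j \<and> odd i} - {1}"
    by (auto; presburger)
  then show ?thesis using card_odd_lt[of j] by (simp add: card_Diff_singleton_if)
qed

lemma card_Ej: "card {i::nat. 2 \<le> i \<and> i < j \<and> even i} = (j+1) div 2 - 1"
proof -
  have "{i::nat. 2 \<le> i \<and> i < j \<and> even i} = {i. i < j \<and> even i} - {0}"
    by (auto; presburger)
  then show ?thesis using card_even_lt[of j] by (simp add: card_Diff_singleton_if)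
qed

lemma fstep: "1 \<le> r \<Longrightarrow> (r - 4 + 2)^2 div 8 + r \<le> ((r::nat) + 2)^2 div 8"
proof (cases "r \<ge> 4")
  case True
  then obtain s where s: "r = s + 4" by (metis add.commute le_Suc_ex)
  have "(r+2)^2 = (r - 4 + 2)^2 + r * 8" unfolding s by (simp add: power2_eq_square algebra_simps)
  then show ?thesis by simp
next
  case False
  assume "1 \<le> r"
  with False have "r = 1 \<or> r = 2 \<or> r = 3" by auto
  then show ?thesis by (elim disjE) (simp_all add: power2_eq_square)
qed

lemma g_gen: "3 \<le> j \<Longrightarrow> j \<le> r \<Longrightarrow> g (r-4) (j-2) = (r - j) div 2"
  unfolding g_def by (cases "r \<ge> 4") auto

lemma g_two: "g (r-4) (2-2) = (r - 3) div 2"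
  unfolding g_def by (cases "r \<ge> 4") auto

lemma arith_U0:
  assumes "odd j" "3 \<le> j" "j \<le> r" "g (r-4) (j-2) \<le> d"
  shows "r \<le> (1 + r div 2 + (j div 2 - 1)) + (1 + d)"
proof -
  have d: "(r - j) div 2 \<le> d" using assms g_gen by simp
  obtain t where t: "j = 2*t+1" using assms(1) oddE by blast
  have jt: "j div 2 = t" using t by simp
  have "r div 2 + (r - j) div 2 + t \<ge> r - 1" using t assms(3) by presburger
  then show ?thesis using jt d t by linarith
qed

lemma arith_U1:
  assumes "even j" "2 \<le> j" "j \<le> r" "even r \<Longrightarrow> j \<noteq> 2" "1 \<le> r" "g (r-4) (j-2) \<le> d"
  shows "r \<le> (1 + ((r+1) div 2 - 1) + ((j+1) div 2 - 1)) + (1 + d)"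
proof (cases "j = 2")
  case True
  then have "(r - 3) div 2 \<le> d" using assms g_two by simp
  moreover have "odd r" using True assms by blast
  moreover have "(j+1) div 2 = 1" using True by simp
  moreover have "odd r \<Longrightarrow> 3 \<le> r \<Longrightarrow> (r+1) div 2 + (r - 3) div 2 = r - 1" by presburger
  ultimately show ?thesis using True assms(3) by linarith
next
  case False
  then have j4: "4 \<le> j" using assms by presburger
  then have d: "(r - j) div 2 \<le> d" using assms g_gen by simp
  obtain t where t: "j = 2*t" using assms(1) by blast
  have jt: "(j+1) div 2 = t" using t by simp
  have "(r+1) div 2 + (r - j) div 2 + t \<ge> r" using t assms(3) by presburger
  then show ?thesis using jt d t j4 by linarith
qed

lemma arith_deg:
  assumes "2 \<le> j" "g (r-4) (j-2) \<le> d"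
    "j \<le> r \<Longrightarrow> even j \<Longrightarrow> b0" "j \<le> r \<Longrightarrow> odd j \<Longrightarrow> b1" "even r \<Longrightarrow> j = 2 \<Longrightarrow> b1"
  shows "g r j \<le> d + (if b0 then 1 else 0) + (if b1 then 1 else 0)"
proof (cases "j \<le> r")
  case False
  then have "g r j = 0" using assms unfolding g_def by simp
  then show ?thesis by simp
next
  case True
  show ?thesis
  proof (cases "j = 2")
    case j2: True
    have "(r - 3) div 2 \<le> d" using assms j2 g_two by simp
    moreover have "g r j = r div 2" using j2 unfolding g_def by simp
    moreover have "b0" using assms True j2 by simp
    moreover have "even r \<Longrightarrow> b1" using assms j2 by simp
    moreover have "even r \<Longrightarrow> r div 2 \<le> (r - 3) div 2 + 2" by presburger
    moreover have "odd r \<Longrightarrow> r div 2 \<le> (r - 3) div 2 + 1" by presburger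
    ultimately show ?thesis by (cases "even r") auto
  next
    case False
    then have "(r - j) div 2 \<le> d" using assms True g_gen by simp
    moreover have "g r j = (r + 2 - j) div 2" using assms unfolding g_def by simp
    moreover have "b0 \<or> b1" using assms True by blast
    moreover have "(r + 2 - j) div 2 \<le> (r - j) div 2 + 1" using True by presburger
    ultimately show ?thesis by auto
  qed
qed


lemma step:
  assumes r1: "1 \<le> r" and Lc: "a + (r+1) div 2 + 2 \<le> n"
   and H'W: "H' \<subseteq> KE {a+2..<n}" and H'c: "card H' \<le> (r-4+2)^2 div 8"
   and H'g: "\<forall>x\<in>{a+2..<n}. g (r-4) (x-(a+2)) \<le> deg H' x"
   and H'p: "perc (r-4) {a+2..<n} H'"
  shows "\<exists>H. H \<subseteq> KE {a..<n} \<and> card H \<le> (r+2)^2 div 8 \<and> (\<forall>x\<in>{a..<n}. g r (x - a) \<le> deg H x) \<and> perc r {a..<n} H"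
proof -
  define L where "L = n - a"
  have nL: "n = a + L" using Lc unfolding L_def by simp
  have L2: "r + 4 \<le> 2 * L" using Lc unfolding L_def by presburger
  have L3: "3 \<le> L" using Lc r1 unfolding L_def by presburger
  define \<phi> where "\<phi> j = (if j < L then j else 2 * L - 1 - j)" for j
  define E0 where "E0 = {j::nat. 2 \<le> j \<and> j \<le> r \<and> even j}"
  define O1 where "O1 = {j::nat. 3 \<le> j \<and> j \<le> r \<and> odd j}"
  define S0 where "S0 = (\<lambda>j. a + \<phi> j) ` E0"
  define S1' where "S1' = (\<lambda>j. a + \<phi> j) ` O1"
  define S1 where "S1 = S1' \<union> (if even r then {a+2} else {})"
  define H where "H = (if odd r then {{a, Suc a}} else {}) \<union> (\<lambda>s. {a,s}) ` S0 \<union> (\<lambda>s. {Suc a,s}) ` S1 \<union> H'"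
  define W where "W = {a..<n}"
  define W' where "W' = {a+2..<n}"
  have finW: "finite W" unfolding W_def by simp
  have phr: "2 \<le> \<phi> j \<and> \<phi> j < L" if "2 \<le> j" "j \<le> r" for j
    using that L2 unfolding \<phi>_def by auto
  have inj0: "inj_on (\<lambda>j. a + \<phi> j) E0"
  proof (rule inj_onI)
    fix x y assume "x \<in> E0" "y \<in> E0" "a + \<phi> x = a + \<phi> y"
    then show "x = y" using L2 unfolding E0_def \<phi>_def by (simp split: if_splits; presburger)
  qed
  have inj1: "inj_on (\<lambda>j. a + \<phi> j) O1"
  proof (rule inj_onI)
    fix x y assume "x \<in> O1" "y \<in> O1" "a + \<phi> x = a + \<phi> y"
    then show "x = y" using L2 unfolding O1_def \<phi>_def by (simp split: if_splits; presburger)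
  qed
  have cS0: "card S0 = r div 2" unfolding S0_def using card_image[OF inj0] card_E0 E0_def by simp
  have cS1': "card S1' = (r+1) div 2 - 1" unfolding S1'_def using card_image[OF inj1] card_O1 O1_def by simp
  have S0W: "S0 \<subseteq> W'" unfolding S0_def W'_def E0_def nL using phr by force
  have S1'W: "S1' \<subseteq> W'" unfolding S1'_def W'_def O1_def nL using phr by force
  have a2W: "a + 2 \<in> W'" unfolding W'_def nL using L3 by simp
  have S1W: "S1 \<subseteq> W'" unfolding S1_def using S1'W a2W by auto
  have a2S1': "a + 2 \<notin> S1'"
  proof
    assume "a + 2 \<in> S1'"
    then obtain j where "j \<in> O1" "2 = \<phi> j" unfolding S1'_def by auto
    then show False using L2 unfolding O1_def \<phi>_def by (simp split: if_splits; presburger)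
  qed
  have cS1: "card S1 = (r+1) div 2 - 1 + (if even r then 1 else 0)"
  proof (cases "even r")
    case True
    have "finite S1'" using S1'W unfolding W'_def by (simp add: finite_subset)
    then show ?thesis using True a2S1' cS1' unfolding S1_def by simp
  next
    case False then show ?thesis using cS1' unfolding S1_def by simp
  qed
  have M0: "a + j \<in> S0" if "2 \<le> j" "j < L" "j \<le> r" "even j" for j
  proof -
    have "j \<in> E0" "\<phi> j = j" using that unfolding E0_def \<phi>_def by auto
    then show ?thesis unfolding S0_def by (metis image_eqI)
  qed
  have M1: "a + j \<in> S1'" if "3 \<le> j" "j < L" "j \<le> r" "odd j" for j
  proof -
    have "j \<in> O1" "\<phi> j = j" using that unfolding O1_def \<phi>_def by auto
    then show ?thesis unfolding S1'_def by (metis image_eqI)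
  qed
  have N0: "a + i \<notin> S0" if "odd j" "3 \<le> j" "j < L" "a + j \<notin> S0" "odd i" "i < j" for i j
  proof
    assume "a + i \<in> S0"
    then obtain j' where j': "j' \<in> E0" "i = \<phi> j'" unfolding S0_def by auto
    have jL: "L \<le> j'"
    proof (rule ccontr)
      assume "\<not> L \<le> j'"
      then have "i = j'" using j' unfolding \<phi>_def by simp
      then show False using j' that unfolding E0_def by simp
    qed
    then have ii: "i = 2 * L - 1 - j'" using j' unfolding \<phi>_def by simp
    have jr: "j' \<le> r" "even j'" using j' unfolding E0_def by auto
    have A1: "2 * L - 1 - j \<le> r" using ii jr that L2 by linarith
    have A2: "L \<le> 2 * L - 1 - j" using that by linarith
    have A3: "even (2 * L - 1 - j)" using that L3 by presburger
    have "2 * L - 1 - j \<in> E0 \<and> \<phi> (2 * L - 1 - j) = j"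
      using A1 A2 A3 L3 that unfolding E0_def \<phi>_def by auto
    then have "a + j \<in> S0" unfolding S0_def by (metis image_eqI)
    then show False using that by simp
  qed
  have N1: "a + i \<notin> S1'" if "even j" "2 \<le> j" "j < L" "a + j \<notin> S1'" "even i" "i < j" for i j
  proof
    assume "a + i \<in> S1'"
    then obtain j' where j': "j' \<in> O1" "i = \<phi> j'" unfolding S1'_def by auto
    have jL: "L \<le> j'"
    proof (rule ccontr)
      assume "\<not> L \<le> j'"
      then have "i = j'" using j' unfolding \<phi>_def by simp
      then show False using j' that unfolding O1_def by simp
    qed
    then have ii: "i = 2 * L - 1 - j'" using j' unfolding \<phi>_def by simp
    have jr: "j' \<le> r" "odd j'" using j' unfolding O1_def by auto
    have A1: "2 * L - 1 - j \<le> r" using ii jr that L2 by linarith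
    have A2: "L \<le> 2 * L - 1 - j" using that by linarith
    have A3: "odd (2 * L - 1 - j)" using that L3 by presburger
    have "2 * L - 1 - j \<in> O1 \<and> \<phi> (2 * L - 1 - j) = j"
      using A1 A2 A3 L3 that unfolding O1_def \<phi>_def by auto
    then have "a + j \<in> S1'" unfolding S1'_def by (metis image_eqI)
    then show False using that by simp
  qed
  have HW: "H \<subseteq> KE W"
  proof -
    have "{a, Suc a} \<in> KE W" using L3 unfolding W_def nL by (simp add: KE_mem)
    moreover have "{a,s} \<in> KE W" if "s \<in> S0" for s using that S0W unfolding W_def W'_def by (auto simp: KE_mem)
    moreover have "{Suc a,s} \<in> KE W" if "s \<in> S1" for s using that S1W unfolding W_def W'_def by (auto simp: KE_mem)
    moreover have "KE W' \<subseteq> KE W"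
    proof
      fix f assume "f \<in> KE W'"
      then obtain u v where "f = {u,v}" "u \<in> W'" "v \<in> W'" "u \<noteq> v" using KE_elem by blast
      then show "f \<in> KE W" unfolding W_def W'_def by (auto simp: KE_mem)
    qed
    ultimately show ?thesis using H'W unfolding H_def W'_def by auto
  qed
  have finS0: "finite S0" using S0W unfolding W'_def by (simp add: finite_subset)
  have finS1: "finite S1" using S1W unfolding W'_def by (simp add: finite_subset)
  have cardH: "card H \<le> (r+2)^2 div 8"
  proof -
    define A where "A = (if odd r then {{a, Suc a}} else ({}::nat set set))"
    define B where "B = (\<lambda>s. {a,s}) ` S0"
    define D where "D = (\<lambda>s. {Suc a,s}) ` S1"
    have "card H \<le> card (A \<union> B \<union> D) + card H'" unfolding H_def A_def B_def D_def by (rule card_Un_le)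
    also have "card (A \<union> B \<union> D) \<le> card (A \<union> B) + card D" by (rule card_Un_le)
    also have "card (A \<union> B) \<le> card A + card B" by (rule card_Un_le)
    also have "card B \<le> card S0" unfolding B_def by (rule card_image_le[OF finS0])
    also have "card D \<le> card S1" unfolding D_def by (rule card_image_le[OF finS1])
    also have "card A = (if odd r then 1 else 0)" unfolding A_def by simp
    finally have "card H \<le> (if odd r then 1 else 0) + r div 2 + ((r+1) div 2 - 1 + (if even r then 1 else 0)) + (r-4+2)^2 div 8"
      using cS0 cS1 H'c by simp
    moreover have "(if odd r then 1 else 0) + r div 2 + ((r+1) div 2 - 1 + (if even r then 1 else 0)) = r"
      using r1 by presburger
    ultimately show ?thesis using fstep[OF r1] by linarith
  qed
  have nbH': "{w. {x,w} \<in> H'} \<subseteq> W'" for x using nbr_in[OF H'W] unfolding W'_def .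
  have finH': "finite {w. {x,w} \<in> H'}" for x using nbr_fin[OF H'W] unfolding W'_def by simp
  have degH': "g (r-4) (j-2) \<le> deg H' (a+j)" if "2 \<le> j" "j < L" for j
  proof -
    have "a + j \<in> {a+2..<n}" using that nL by simp
    then have "g (r-4) (a + j - (a+2)) \<le> deg H' (a+j)" using H'g by blast
    moreover have "a + j - (a+2) = j - 2" by simp
    ultimately show ?thesis by simp
  qed
  have percH: "perc r W H"
    unfolding perc_def
  proof (intro allI impI)
    fix C assume HC: "H \<subseteq> C" and CW: "C \<subseteq> KE W" and cl: "closedc r W C"
    have clo: "{u,v} \<in> C" if "u \<in> W" "v \<in> W" "u \<noteq> v" "r \<le> card (nb C u v)" for u v
      using cl that unfolding closedc_def by blast
    have "H' \<subseteq> H" unfolding H_def by blast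
    then have H'C: "H' \<subseteq> C" using HC by (rule subset_trans)
    have hS0: "{a,s} \<in> C" if "s \<in> S0" for s
    proof -
      have "{a,s} \<in> H" unfolding H_def using that by blast
      then show ?thesis using HC by blast
    qed
    have hS1: "{Suc a,s} \<in> C" if "s \<in> S1" for s
    proof -
      have "{Suc a,s} \<in> H" unfolding H_def using that by blast
      then show ?thesis using HC by blast
    qed
    have hodd: "{a, Suc a} \<in> C" if "odd r"
    proof -
      have "{a, Suc a} \<in> H" unfolding H_def using that by simp
      then show ?thesis using HC by blast
    qed
    have U0: "{a, a+j} \<in> C" if "1 \<le> j" "j < L" for j
      using that
    proof (induction j rule: less_induct)
      case (less j)
      show ?case
      proof (cases "a + j \<in> S0")
        case True then show ?thesis using hS0 by simp
      next
        case nS0: False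
        consider (one) "j = 1" | (big) "2 \<le> j" "r < j" | (mid) "2 \<le> j" "j \<le> r" using less.prems by linarith
        then show ?thesis
        proof cases
          case one
          show ?thesis
          proof (cases "odd r")
            case True then show ?thesis using hodd one by simp
          next
            case False
            have "card S0 + card S1 \<le> card (nb C a (Suc a))"
              by (rule count_lb[OF CW finW]) (use hS0 hS1 S0W S1W in \<open>auto simp: W'_def\<close>)
            moreover have "r div 2 + ((r+1) div 2 - 1 + 1) = r" using False r1 by presburger
            ultimately have "r \<le> card (nb C a (Suc a))" using cS0 cS1 False by (simp; presburger)
            then have "{a, Suc a} \<in> C" by (intro clo) (use L3 in \<open>auto simp: W_def nL\<close>)
            then show ?thesis using one by simp
          qed
        next
          case big
          define X where "X = (\<lambda>i. a + i) ` {1..<j}"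
          have "card X + card ({}::nat set) \<le> card (nb C a (a+j))"
          proof (rule count_lb[OF CW finW])
            show "a \<noteq> a + j" using less.prems by simp
            show "X \<subseteq> {w. {a, w} \<in> C \<and> w \<noteq> a + j}"
            proof
              fix w assume "w \<in> X"
              then obtain i where i0: "i \<in> {1..<j}" "w = a + i" unfolding X_def by (rule imageE)
              then have i: "w = a + i" "1 \<le> i" "i < j" by auto
              then have "{a, a+i} \<in> C" using less.IH[of i] less.prems by simp
              then show "w \<in> {w. {a, w} \<in> C \<and> w \<noteq> a + j}" using i by simp
            qed
          qed simp
          moreover have "card X = j - 1" unfolding X_def by (simp add: card_image)
          ultimately have "r \<le> card (nb C a (a+j))" using big by simp
          then show ?thesis by (intro clo) (use less.prems in \<open>auto simp: W_def nL\<close>)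
        next
          case mid
          have oj: "odd j"
          proof (rule ccontr)
            assume "\<not> odd j" then have "a+j \<in> S0" using M0 mid less.prems by simp
            then show False using nS0 by simp
          qed
          have j3: "3 \<le> j" using oj mid by presburger
          define Oj where "Oj = {i::nat. 3 \<le> i \<and> i < j \<and> odd i}"
          define X where "X = insert (Suc a) (S0 \<union> (\<lambda>i. a + i) ` Oj)"
          define Y where "Y = insert (Suc a) {w. {a+j, w} \<in> H'}"
          have finOj: "finite Oj" unfolding Oj_def by simp
          have dis: "S0 \<inter> (\<lambda>i. a + i) ` Oj = {}"
            using N0[OF oj j3 less.prems(2) nS0] unfolding Oj_def by auto
          have nsa: "Suc a \<notin> S0 \<union> (\<lambda>i. a + i) ` Oj" using S0W unfolding W'_def Oj_def by auto
          have cX: "card X = 1 + card S0 + card Oj"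
            unfolding X_def using nsa dis finS0 finOj
            by (simp add: card_Un_disjoint card_image)
          have "Suc a \<notin> {w. {a+j, w} \<in> H'}" using nbH'[of "a+j"] unfolding W'_def by auto
          then have cY: "card Y = 1 + deg H' (a+j)"
            unfolding Y_def deg_def using finH'[of "a+j"] by simp
          have "card X + card Y \<le> card (nb C a (a+j))"
          proof (rule count_lb[OF CW finW])
            show "a \<noteq> a + j" using less.prems by simp
            show "X \<subseteq> {w. {a, w} \<in> C \<and> w \<noteq> a + j}"
            proof
              fix w assume w: "w \<in> X"
              show "w \<in> {w. {a, w} \<in> C \<and> w \<noteq> a + j}"
              proof (cases "w = Suc a")
                case True
                then show ?thesis using less.IH[of 1] less.prems j3 by simp
              next
                case False
                then have "w \<in> S0 \<or> (\<exists>i\<in>Oj. w = a + i)" using w unfolding X_def by auto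
                then show ?thesis
                proof
                  assume "w \<in> S0" then show ?thesis using hS0 nS0 by auto
                next
                  assume "\<exists>i\<in>Oj. w = a + i"
                  then obtain i where i: "i \<in> Oj" "w = a + i" by blast
                  then have "{a, a+i} \<in> C" using less.IH[of i] less.prems unfolding Oj_def by simp
                  then show ?thesis using i unfolding Oj_def by simp
                qed
              qed
            qed
            show "Y \<subseteq> {w. {a + j, w} \<in> C \<and> w \<noteq> a}"
            proof
              fix w assume w: "w \<in> Y"
              show "w \<in> {w. {a + j, w} \<in> C \<and> w \<noteq> a}"
              proof (cases "w = Suc a")
                case True
                have "a + j \<in> S1" using M1[OF j3 less.prems(2) mid(2) oj] unfolding S1_def by simp
                then have "{Suc a, a+j} \<in> C" using hS1 by simp
                then show ?thesis using True by (simp add: insert_commute)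
              next
                case False
                then have "{a+j, w} \<in> H'" using w unfolding Y_def by simp
                moreover have "w \<in> W'" using nbH' calculation by blast
                ultimately show ?thesis using H'C unfolding W'_def by auto
              qed
            qed
          qed
          moreover have "g (r-4) (j-2) \<le> deg H' (a+j)" using degH' mid less.prems by simp
          moreover have "card Oj = j div 2 - 1" unfolding Oj_def by (rule card_Oj)
          ultimately have "r \<le> card (nb C a (a+j))" using cS0 cX cY arith_U0[OF oj j3 mid(2), of "deg H' (a+j)"]
            by linarith
          then show ?thesis by (intro clo) (use less.prems in \<open>auto simp: W_def nL\<close>)
        qed
      qed
    qed
    have U1: "{Suc a, a+j} \<in> C" if "2 \<le> j" "j < L" for j
      using that
    proof (induction j rule: less_induct)
      case (less j)
      have a1: "{Suc a, a} \<in> C" using U0[of 1] L3 by (simp add: insert_commute)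
      show ?case
      proof (cases "a + j \<in> S1")
        case True then show ?thesis using hS1 by simp
      next
        case nS1: False
        consider (big) "r < j" | (mid) "j \<le> r" by linarith
        then show ?thesis
        proof cases
          case big
          define X where "X = insert a ((\<lambda>i. a + i) ` {2..<j})"
          have "card X + card ({}::nat set) \<le> card (nb C (Suc a) (a+j))"
          proof (rule count_lb[OF CW finW])
            show "Suc a \<noteq> a + j" using less.prems by simp
            show "X \<subseteq> {w. {Suc a, w} \<in> C \<and> w \<noteq> a + j}"
            proof
              fix w assume "w \<in> X"
              then have "w = a \<or> w \<in> (\<lambda>i. a + i) ` {2..<j}" unfolding X_def by simp
              then consider "w = a" | i where "w = a + i" "2 \<le> i" "i < j" by (auto elim!: imageE simp del: image_add_atLeastLessThan)
              then show "w \<in> {w. {Suc a, w} \<in> C \<and> w \<noteq> a + j}"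
              proof cases
                case 1 then show ?thesis using a1 less.prems by simp
              next
                case (2 i)
                then have "{Suc a, a+i} \<in> C" using less.IH[of i] less.prems by simp
                then show ?thesis using 2 by simp
              qed
            qed
          qed simp
          moreover have "card X = j - 1" unfolding X_def using less.prems by (simp add: card_image)
          ultimately have "r \<le> card (nb C (Suc a) (a+j))" using big by simp
          then show ?thesis by (intro clo) (use less.prems L3 in \<open>auto simp: W_def nL\<close>)
        next
          case mid
          have ej: "even j"
          proof (rule ccontr)
            assume ne: "\<not> even j"
            then have "3 \<le> j" using less.prems by presburger
            then have "a+j \<in> S1'" using M1 mid less.prems ne by simp
            then show False using nS1 unfolding S1_def by simp
          qed
          have j2: "even r \<Longrightarrow> j \<noteq> 2" using nS1 unfolding S1_def by auto
          have nS1': "a + j \<notin> S1'" using nS1 unfolding S1_def by simp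
          define Ej where "Ej = {i::nat. 2 \<le> i \<and> i < j \<and> even i}"
          define X where "X = insert a (S1' \<union> (\<lambda>i. a + i) ` Ej)"
          define Y where "Y = insert a {w. {a+j, w} \<in> H'}"
          have finEj: "finite Ej" unfolding Ej_def by simp
          have finS1': "finite S1'" using S1'W unfolding W'_def by (simp add: finite_subset)
          have dis: "S1' \<inter> (\<lambda>i. a + i) ` Ej = {}"
            using N1[OF ej less.prems(1) less.prems(2) nS1'] unfolding Ej_def by auto
          have nsa: "a \<notin> S1' \<union> (\<lambda>i. a + i) ` Ej" using S1'W unfolding W'_def Ej_def by auto
          have cX: "card X = 1 + card S1' + card Ej"
            unfolding X_def using nsa dis finS1' finEj
            by (simp add: card_Un_disjoint card_image)
          have "a \<notin> {w. {a+j, w} \<in> H'}" using nbH'[of "a+j"] unfolding W'_def by auto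
          then have cY: "card Y = 1 + deg H' (a+j)"
            unfolding Y_def deg_def using finH'[of "a+j"] by simp
          have "card X + card Y \<le> card (nb C (Suc a) (a+j))"
          proof (rule count_lb[OF CW finW])
            show "Suc a \<noteq> a + j" using less.prems by simp
            show "X \<subseteq> {w. {Suc a, w} \<in> C \<and> w \<noteq> a + j}"
            proof
              fix w assume w: "w \<in> X"
              show "w \<in> {w. {Suc a, w} \<in> C \<and> w \<noteq> a + j}"
              proof (cases "w = a")
                case True
                then show ?thesis using a1 less.prems by simp
              next
                case False
                then have "w \<in> S1' \<or> (\<exists>i\<in>Ej. w = a + i)" using w unfolding X_def by auto
                then show ?thesis
                proof
                  assume "w \<in> S1'" then show ?thesis using hS1 nS1' unfolding S1_def by auto
                next
                  assume "\<exists>i\<in>Ej. w = a + i"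
                  then obtain i where i: "i \<in> Ej" "w = a + i" by blast
                  then have "{Suc a, a+i} \<in> C" using less.IH[of i] less.prems unfolding Ej_def by simp
                  then show ?thesis using i unfolding Ej_def by simp
                qed
              qed
            qed
            show "Y \<subseteq> {w. {a + j, w} \<in> C \<and> w \<noteq> Suc a}"
            proof
              fix w assume w: "w \<in> Y"
              show "w \<in> {w. {a + j, w} \<in> C \<and> w \<noteq> Suc a}"
              proof (cases "w = a")
                case True
                have "{a, a+j} \<in> C" using U0[of j] less.prems by simp
                then show ?thesis using True by (simp add: insert_commute)
              next
                case False
                then have "{a+j, w} \<in> H'" using w unfolding Y_def by simp
                moreover have "w \<in> W'" using nbH' calculation by blast
                ultimately show ?thesis using H'C unfolding W'_def by auto
              qed
            qed
          qed
          moreover have "g (r-4) (j-2) \<le> deg H' (a+j)" using degH' mid less.prems by simp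
          moreover have "card Ej = (j+1) div 2 - 1" unfolding Ej_def by (rule card_Ej)
          ultimately have "r \<le> card (nb C (Suc a) (a+j))" using cS1' cX cY arith_U1[OF ej less.prems(1) mid j2 r1, of "deg H' (a+j)"]
            by linarith
          then show ?thesis by (intro clo) (use less.prems L3 in \<open>auto simp: W_def nL\<close>)
        qed
      qed
    qed
    have UA0: "\<forall>w\<in>{a..<n}. w \<noteq> a \<longrightarrow> {a,w} \<in> C"
    proof (intro ballI impI)
      fix w assume "w \<in> {a..<n}" "w \<noteq> a"
      then have "1 \<le> w - a" "w - a < L" using nL by auto
      then have "{a, a + (w - a)} \<in> C" by (rule U0)
      then show "{a,w} \<in> C" using \<open>w \<in> {a..<n}\<close> by simp
    qed
    have UA1: "\<forall>w\<in>{a..<n}. w \<noteq> Suc a \<longrightarrow> {Suc a,w} \<in> C"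
    proof (intro ballI impI)
      fix w assume w: "w \<in> {a..<n}" "w \<noteq> Suc a"
      show "{Suc a,w} \<in> C"
      proof (cases "w = a")
        case True
        then show ?thesis using U0[of 1] L3 by (simp add: insert_commute)
      next
        case False
        then have "2 \<le> w - a" "w - a < L" using nL w by auto
        then have "{Suc a, a + (w - a)} \<in> C" by (rule U1)
        then show ?thesis using w by simp
      qed
    qed
    have CW': "C \<subseteq> KE {a..<n}" using CW unfolding W_def .
    have clW: "closedc r {a..<n} C" using cl unfolding W_def .
    have cl': "closedc (r-4) {a+2..<n} (C \<inter> KE {a+2..<n})"
      by (rule restrict_closed[OF CW' clW UA0 UA1])
    have s1: "H' \<subseteq> C \<inter> KE {a+2..<n}" using H'C H'W by blast
    have s2: "C \<inter> KE {a+2..<n} \<subseteq> KE {a+2..<n}" by blast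
    have "C \<inter> KE {a+2..<n} = KE {a+2..<n}"
      using H'p unfolding perc_def using s1 s2 cl' by blast
    then show "C = KE W" using peel_final[OF CW' UA0 UA1] unfolding W_def by simp
  qed
  have degH: "\<forall>x\<in>W. g r (x - a) \<le> deg H x"
  proof
    fix x assume xW: "x \<in> W"
    define j where "j = x - a"
    have xj: "x = a + j" "j < L" using xW unfolding j_def W_def nL by auto
    have finx: "finite {w. {x,w} \<in> H}" using nbr_fin[OF HW finW] .
    consider (z) "j = 0" | (o) "j = 1" | (t) "2 \<le> j" by linarith
    then show "g r (x - a) \<le> deg H x"
    proof cases
      case z
      define Z where "Z = S0 \<union> (if odd r then {Suc a} else {})"
      have "Z \<subseteq> {w. {x,w} \<in> H}" using xj z unfolding Z_def H_def by auto
      then have "card Z \<le> deg H x" unfolding deg_def using finx by (rule card_mono[rotated])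
      moreover have "Suc a \<notin> S0" using S0W unfolding W'_def by auto
      then have "card Z = r div 2 + (if odd r then 1 else 0)"
        using finS0 cS0 unfolding Z_def by simp
      moreover have "g r (x - a) = (r+1) div 2" using z unfolding j_def g_def by simp
      moreover have "(r+1) div 2 \<le> r div 2 + (if odd r then 1 else 0)" by presburger
      ultimately show ?thesis by linarith
    next
      case o
      define Z where "Z = S1 \<union> (if odd r then {a} else {})"
      have "Z \<subseteq> {w. {x,w} \<in> H}" using xj o unfolding Z_def H_def by (auto simp: insert_commute)
      then have "card Z \<le> deg H x" unfolding deg_def using finx by (rule card_mono[rotated])
      moreover have "a \<notin> S1" using S1W unfolding W'_def by auto
      then have "card Z = card S1 + (if odd r then 1 else 0)"
        using finS1 unfolding Z_def by simp
      moreover have "g r (x - a) = (r+1) div 2" using o unfolding j_def g_def by simp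
      moreover have "(r+1) div 2 \<le> ((r+1) div 2 - 1 + (if even r then 1 else 0)) + (if odd r then 1 else 0)" using r1 by presburger
      ultimately show ?thesis using cS1 by linarith
    next
      case t
      define Z where "Z = {w. {x,w} \<in> H'} \<union> (if x \<in> S0 then {a} else {}) \<union> (if x \<in> S1 then {Suc a} else {})"
      have "Z \<subseteq> {w. {x,w} \<in> H}" unfolding Z_def H_def by (auto simp: insert_commute)
      then have "card Z \<le> deg H x" unfolding deg_def using finx by (rule card_mono[rotated])
      moreover have "a \<notin> {w. {x,w} \<in> H'}" "Suc a \<notin> {w. {x,w} \<in> H'}" using nbH'[of x] unfolding W'_def by auto
      then have "card Z = deg H' x + (if x \<in> S0 then 1 else 0) + (if x \<in> S1 then 1 else 0)"
        using finH'[of x] unfolding Z_def deg_def by simp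
      moreover have "g (r-4) (j-2) \<le> deg H' x" using degH' t xj by simp
      moreover have "j \<le> r \<Longrightarrow> even j \<Longrightarrow> x \<in> S0" using M0 t xj by simp
      moreover have "j \<le> r \<Longrightarrow> odd j \<Longrightarrow> x \<in> S1"
      proof -
        assume "j \<le> r" "odd j"
        moreover then have "3 \<le> j" using t by presburger
        ultimately show "x \<in> S1" using M1[of j] xj unfolding S1_def by simp
      qed
      moreover have "even r \<Longrightarrow> j = 2 \<Longrightarrow> x \<in> S1" using xj unfolding S1_def by simp
      ultimately show ?thesis using arith_deg[OF t, of r "deg H' x" "x \<in> S0" "x \<in> S1"] unfolding j_def[symmetric]
        by simp
    qed
  qed
  show ?thesis using HW cardH degH percH unfolding W_def by blast
qed


lemma main:
  "\<forall>a n. (r = 0 \<or> a + (r+1) div 2 + 2 \<le> n) \<longrightarrow> (\<exists>H. H \<subseteq> KE {a..<n} \<and> card H \<le> (r+2)^2 div 8 \<and> (\<forall>x\<in>{a..<n}. g r (x - a) \<le> deg H x) \<and> perc r {a..<n} H)"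
proof (induction r rule: less_induct)
  case (less r)
  show ?case
  proof (intro allI impI)
    fix a n assume cond: "r = 0 \<or> a + (r+1) div 2 + 2 \<le> n"
    show "\<exists>H. H \<subseteq> KE {a..<n} \<and> card H \<le> (r+2)^2 div 8 \<and> (\<forall>x\<in>{a..<n}. g r (x - a) \<le> deg H x) \<and> perc r {a..<n} H"
    proof (cases "r = 0")
      case True
      have p: "perc 0 {a..<n} {}" unfolding perc_def
      proof (intro allI impI)
        fix C assume "{} \<subseteq> C" and CW: "C \<subseteq> KE {a..<n}" and cl: "closedc 0 {a..<n} C"
        show "C = KE {a..<n}"
        proof
          show "KE {a..<n} \<subseteq> C"
          proof
            fix f assume "f \<in> KE {a..<n}"
            then obtain u v where "f = {u,v}" "u \<in> {a..<n}" "v \<in> {a..<n}" "u \<noteq> v" using KE_elem by blast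
            then show "f \<in> C" using cl unfolding closedc_def by blast
          qed
        qed (rule CW)
      qed
      have gz: "g 0 j \<le> d" for j d unfolding g_def by simp
      show ?thesis using True p gz by (intro exI[of _ "{}"]) simp
    next
      case False
      then have r1: "1 \<le> r" by simp
      from cond False have Lc: "a + (r+1) div 2 + 2 \<le> n" by simp
      have lt: "r - 4 < r" using r1 by simp
      have c2: "r - 4 = 0 \<or> (a+2) + (r - 4 + 1) div 2 + 2 \<le> n"
      proof (cases "r \<le> 4")
        case True then show ?thesis by simp
      next
        case False
        have "(r - 4 + 1) div 2 + 2 \<le> (r+1) div 2" using False by presburger
        then show ?thesis using Lc by simp
      qed
      obtain H' where H': "H' \<subseteq> KE {a+2..<n}" "card H' \<le> (r-4+2)^2 div 8"
        "\<forall>x\<in>{a+2..<n}. g (r-4) (x-(a+2)) \<le> deg H' x" "perc (r-4) {a+2..<n} H'"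
        using less.IH[OF lt, rule_format, OF c2] by blast
      show ?thesis by (rule step[OF r1 Lc H'])
    qed
  qed
qed

theorem lemma5p2:
  fixes n r :: nat
  assumes "(r + 1) div 2 + 2 \<le> n"
  shows "m_perc (line_V (K_V n) K_E) line_E r \<le> (r + 2)^2 div 8"
proof -
  have "r = 0 \<or> 0 + (r+1) div 2 + 2 \<le> n" using assms by simp
  then obtain H where H: "H \<subseteq> KE {0..<n}" "card H \<le> (r+2)^2 div 8" "perc r {0..<n} H"
    using main[of r, rule_format, of 0 n] by blast
  have "percolating (line_V (K_V n) K_E) line_E r H" by (rule perc_percolating[OF H(1) H(3)])
  then have "m_perc (line_V (K_V n) K_E) line_E r \<le> card H" unfolding m_perc_def by (intro Least_le) blast
  then show ?thesis using H(2) by linarith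
qed

end
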